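(* Let $p$ be an odd prime, let $r=(p-1)/2$, let $\zeta_p=e^{2\pi i/p}$, and let $\varepsilon=(-1)^{(p-1)/2}$. Let $Q$ be either $Q_1(x)=x^2/p$ or $Q_2(x)=cx^2/p$ with $c$ a fixed quadratic non-residue modulo $p$ (viewed as functions $\mathbb{Z}/p\mathbb{Z}\to\mathbb{Q}/\mathbb{Z}$). For $0\le j\le r$ put $\theta_j=e^{2\pi i Q(j)}$, let $T=\operatorname{diag}(\theta_0,\theta_1,\dots,\theta_r)$ be the $(r+1)\times(r+1)$ diagonal matrix, and let $V_Q$ be the $(r+1)\times(r+1)$ Vandermonde matrix whose $(j,k)$ entry is $\theta_j^{\,k}$ for $0\le j,k\le r$ (it is invertible since the $\theta_j$ are pairwise distinct). Then every entry of $T'=V_Q^{-1}TV_Q$ lies in $\mathbb{Z}\left[\frac{1}{2}(1+\sqrt{\varepsilon p})\right]$, the ring of integers of $\mathbb{Q}(\sqrt{\varepsilon p})$.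
   Context: Here $\sqrt{\varepsilon p}$ denotes $\sqrt{p}$ if $p\equiv 1 \pmod 4$ and $\sqrt{-p}=i\sqrt p$ if $p\equiv 3\pmod 4$; equivalently $\sqrt{\varepsilon p}=\sum_{x\in\mathbb{Z}/p\mathbb{Z}}\zeta_p^{x^2}$. *)

theory Defs
  imports "HOL-Number_Theory.Number_Theory" "Jordan_Normal_Form.Gauss_Jordan_Elimination"
begin

definition sqrt_eps :: "nat \<Rightarrow> complex" where
  "sqrt_eps p = (if p mod 4 = 1 then complex_of_real (sqrt (real p))
                 else \<i> * complex_of_real (sqrt (real p)))"

definition quad_ring :: "nat \<Rightarrow> complex set" where
  "quad_ring p = {of_int a + of_int b * ((1 + sqrt_eps p) / 2) | a b :: int. True}"

definition theta :: "nat \<Rightarrow> int \<Rightarrow> nat \<Rightarrow> complex" where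
  "theta p c j = cis (2 * pi * of_int (c * int j ^ 2) / real p)"

definition T_mat :: "nat \<Rightarrow> int \<Rightarrow> complex mat" where
  "T_mat p c = mat ((p - 1) div 2 + 1) ((p - 1) div 2 + 1)
      (\<lambda>(j, k). if j = k then theta p c j else 0)"

definition V_mat :: "nat \<Rightarrow> int \<Rightarrow> complex mat" where
  "V_mat p c = mat ((p - 1) div 2 + 1) ((p - 1) div 2 + 1)
      (\<lambda>(j, k). theta p c j ^ k)"

end

theory Submission imports Defs "HOL-Computational_Algebra.Polynomial" "Jordan_Normal_Form.Determinant" begin

lemma coeff_prod_linear:
  fixes f :: "'a \<Rightarrow> 'b::comm_ring_1"
  assumes "finite A"
  shows "coeff (\<Prod>a\<in>A. [:f a, 1:]) i = (\<Sum>S\<in>{S. S \<subseteq> A \<and> card S + i = card A}. \<Prod>a\<in>S. f a)"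
  using assms
proof (induction A arbitrary: i rule: finite_induct)
  case empty
  have h: "{S. S \<subseteq> {} \<and> card S + i = card ({}::'a set)} = (if i = 0 then {{}} else {})" by auto
  show ?case by (subst h) (cases "i = 0", simp_all)
next
  case (insert x A)
  let ?Q = "\<Prod>a\<in>A. [:f a, 1:]"
  let ?F = "\<lambda>A i. {S. S \<subseteq> A \<and> card S + i = card A}"
  have finA: "finite A" by fact
  have cI[simp]: "card (insert x A) = Suc (card A)" using finA insert(2) by simp
  have "(\<Prod>a\<in>insert x A. [:f a, 1:]) = [:f x, 1:] * ?Q" using insert by simp
  also have "\<dots> = smult (f x) ?Q + pCons 0 ?Q" by (simp add: mult_pCons_left)
  finally have eq: "coeff (\<Prod>a\<in>insert x A. [:f a, 1:]) i
      = f x * coeff ?Q i + (case i of 0 \<Rightarrow> 0 | Suc j \<Rightarrow> coeff ?Q j)"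
    by (simp add: coeff_pCons split: nat.split)
  define F1 where "F1 = {S. S \<subseteq> A \<and> card S + i = Suc (card A)}"
  define F2 where "F2 = insert x ` ?F A i"
  have split: "?F (insert x A) i = F1 \<union> F2"
  proof
    show "?F (insert x A) i \<subseteq> F1 \<union> F2"
    proof
      fix S assume S: "S \<in> ?F (insert x A) i"
      show "S \<in> F1 \<union> F2"
      proof (cases "x \<in> S")
        case True
        have "S - {x} \<subseteq> A" using S by auto
        moreover have "finite S" using S finA finite_subset by auto
        moreover have "card (S - {x}) + i = card A"
        proof -
          have "card (insert x A) = Suc (card A)" using finA insert(2) by simp
          moreover have "card S > 0" using True \<open>finite S\<close> card_gt_0_iff by blast
          moreover have "card (S - {x}) = card S - 1" using True \<open>finite S\<close> by simp
          ultimately show ?thesis using S by simp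
        qed
        ultimately have "S - {x} \<in> ?F A i" by auto
        then show ?thesis unfolding F2_def using True by (auto intro!: image_eqI[of _ _ "S - {x}"])
      next
        case False
        then show ?thesis using S insert(2) unfolding F1_def by auto
      qed
    qed
  next
    show "F1 \<union> F2 \<subseteq> ?F (insert x A) i"
    proof
      fix S assume "S \<in> F1 \<union> F2"
      then show "S \<in> ?F (insert x A) i"
      proof
        assume "S \<in> F1" then show ?thesis using insert(2) unfolding F1_def by auto
      next
        assume "S \<in> F2"
        then obtain T where T: "T \<subseteq> A" "card T + i = card A" "S = insert x T" unfolding F2_def by auto
        have "finite T" using T finA finite_subset by auto
        moreover have "x \<notin> T" using T insert(2) by auto
        ultimately have "card S = Suc (card T)" using T(3) by (simp add: card_insert_disjoint)
        then show ?thesis using T insert(2) by auto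
      qed
    qed
  qed
  have disj: "F1 \<inter> F2 = {}" unfolding F1_def F2_def using insert(2) by auto
  have finF1: "finite F1" by (rule finite_subset[of _ "Pow A"]) (auto simp: F1_def finA)
  have finF: "finite (?F A i)" by (rule finite_subset[of _ "Pow A"]) (auto simp: finA)
  have finF2: "finite F2" unfolding F2_def using finF by simp
  have s1: "(\<Sum>S\<in>F1. \<Prod>a\<in>S. f a) = (case i of 0 \<Rightarrow> 0 | Suc j \<Rightarrow> coeff ?Q j)"
  proof (cases i)
    case 0
    have "F1 = {}"
    proof (rule ccontr)
      assume "F1 \<noteq> {}"
      then obtain S where S: "S \<subseteq> A" "card S = Suc (card A)" unfolding F1_def 0 by auto
      have "card S \<le> card A" by (rule card_mono[OF finA S(1)])
      then show False using S(2) by simp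
    qed
    then show ?thesis using 0 by simp
  next
    case (Suc j)
    have "F1 = ?F A j" unfolding F1_def Suc by auto
    then show ?thesis using Suc insert.IH by simp
  qed
  have s2: "(\<Sum>S\<in>F2. \<Prod>a\<in>S. f a) = f x * coeff ?Q i"
  proof -
    have inj: "inj_on (insert x) (?F A i)"
    proof
      fix S T assume "S \<in> ?F A i" "T \<in> ?F A i" "insert x S = insert x T"
      then show "S = T" using insert(2) insert_ident[of x S T] by blast
    qed
    have "(\<Sum>S\<in>F2. \<Prod>a\<in>S. f a) = (\<Sum>T\<in>?F A i. \<Prod>a\<in>insert x T. f a)"
      unfolding F2_def by (rule sum.reindex[OF inj, unfolded comp_def])
    also have "\<dots> = (\<Sum>T\<in>?F A i. f x * (\<Prod>a\<in>T. f a))"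
    proof (rule sum.cong[OF refl])
      fix T assume "T \<in> ?F A i"
      then have "finite T" "x \<notin> T" using finA finite_subset insert(2) by auto
      then show "(\<Prod>a\<in>insert x T. f a) = f x * (\<Prod>a\<in>T. f a)" by simp
    qed
    also have "\<dots> = f x * coeff ?Q i" using insert.IH by (simp add: sum_distrib_left)
    finally show ?thesis .
  qed
  have "(\<Sum>S\<in>?F (insert x A) i. \<Prod>a\<in>S. f a) = (\<Sum>S\<in>F1. \<Prod>a\<in>S. f a) + (\<Sum>S\<in>F2. \<Prod>a\<in>S. f a)"
    unfolding split by (rule sum.union_disjoint[OF finF1 finF2 disj])
  then show ?case using eq s1 s2 by (simp add: algebra_simps)
qed



definition zz :: "nat \<Rightarrow> int \<Rightarrow> complex" where
  "zz p k = cis (2 * pi * of_int k / real p)"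

lemma prod_neg: "finite S \<Longrightarrow> (\<Prod>a\<in>S. - f a) = (-1) ^ card S * (\<Prod>a\<in>S. (f a :: 'b :: comm_ring_1))"
  by (induction S rule: finite_induct) auto

lemma qr_alt: "quad_ring p = {of_int a + of_int b * ((1 + sqrt_eps p) / 2) | a b. True}"
  unfolding quad_ring_def ..

lemma qr_add: "x \<in> quad_ring p \<Longrightarrow> y \<in> quad_ring p \<Longrightarrow> x + y \<in> quad_ring p"
proof -
  define w where "w = (1 + sqrt_eps p) / 2"
  assume "x \<in> quad_ring p" "y \<in> quad_ring p"
  then obtain a b c d where "x = of_int a + of_int b * w"
    "y = of_int c + of_int d * w" unfolding quad_ring_def w_def[symmetric] by blast
  then have "x + y = of_int (a + c) + of_int (b + d) * w" by (simp add: algebra_simps)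
  then show ?thesis unfolding quad_ring_def w_def[symmetric] by blast
qed

lemma qr_neg: "x \<in> quad_ring p \<Longrightarrow> - x \<in> quad_ring p"
proof -
  define w where "w = (1 + sqrt_eps p) / 2"
  assume "x \<in> quad_ring p"
  then obtain a b where "x = of_int a + of_int b * w"
    unfolding quad_ring_def w_def[symmetric] by blast
  then have "- x = of_int (- a) + of_int (- b) * w" by (simp add: algebra_simps)
  then show ?thesis unfolding quad_ring_def w_def[symmetric] by blast
qed

lemma qr_int: "of_int a \<in> quad_ring p"
proof -
  have "(of_int a :: complex) = of_int a + of_int 0 * ((1 + sqrt_eps p) / 2)" by simp
  then show ?thesis unfolding quad_ring_def by blast
qed

lemma qr_sign: "x \<in> quad_ring p \<Longrightarrow> (-1) ^ n * x \<in> quad_ring p"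
  by (cases "even n") (auto simp: qr_neg)

locale oddp = fixes p :: nat assumes pp: "prime p" and op: "odd p"
begin

abbreviation "z \<equiv> zz p"

lemma p_gt2: "p > 2" using pp op
  by (metis One_nat_def even_numeral order_le_less prime_ge_2_nat)

lemma p_pos: "int p > 0" using p_gt2 by simp

lemma z_add: "z (a + b) = z a * z b"
  unfolding zz_def cis_mult by (simp add: add_divide_distrib distrib_left)

lemma z_0[simp]: "z 0 = 1" by (simp add: zz_def)

lemma z_mult_p: "z (int p * q) = 1"
proof -
  have "2 * pi * of_int (int p * q) / real p = 2 * pi * of_int q" using p_pos by simp
  then show ?thesis unfolding zz_def by simp
qed

lemma z_mod: "z (k mod int p) = z k"
proof -
  have "z k = z (int p * (k div int p) + k mod int p)" by simp
  also have "\<dots> = z (k mod int p)" by (simp only: z_add z_mult_p) simp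
  finally show ?thesis by simp
qed

lemma z_eq_1_iff: "z k = 1 \<longleftrightarrow> int p dvd k"
proof
  assume "z k = 1"
  then have "cos (2 * pi * of_int k / real p) = 1" unfolding zz_def
    by (metis cis.simps(1) one_complex.simps(1))
  then obtain n :: int where n: "2 * pi * of_int k / real p = of_int n * 2 * pi"
    using cos_one_2pi_int by blast
  then have "real_of_int k = n * real p" using p_pos
    by (simp add: field_simps)
  then have "k = n * int p" by (metis of_int_eq_iff of_int_mult of_int_of_nat_eq)
  then show "int p dvd k" by simp
next
  assume "int p dvd k" then obtain q where "k = int p * q" by auto
  then show "z k = 1" using z_mult_p by simp
qed

lemma z_nonzero: "z k \<noteq> 0" by (simp add: zz_def)

lemma z_eq_iff: "z a = z b \<longleftrightarrow> [a = b] (mod int p)"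
proof -
  have "z a = z (a - b) * z b" using z_add[of "a-b" b] by simp
  then have "z a = z b \<longleftrightarrow> z (a - b) = 1" using z_nonzero[of b] by auto
  then show ?thesis using z_eq_1_iff by (simp add: cong_iff_dvd_diff)
qed

lemma z_pow: "z k ^ n = z (int n * k)"
  by (induction n) (auto simp: z_add algebra_simps)

lemma z_sum: "finite S \<Longrightarrow> (\<Prod>a\<in>S. z (f a)) = z (\<Sum>a\<in>S. f a)"
  by (induction S rule: finite_induct) (auto simp: z_add)

lemma geom: "(\<Sum>a\<in>{0..<int p}. z (a * m)) = (if int p dvd m then of_nat p else 0)"
proof -
  have "(\<Sum>a\<in>{0..<int p}. z (a * m)) = (\<Sum>i<p. z m ^ i)"
  proof -
    have "{0..<int p} = int ` {..<p}" by (simp add: image_int_atLeastLessThan atLeast0LessThan[symmetric])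
    then show ?thesis by (simp add: sum.reindex z_pow mult.commute)
  qed
  also have "\<dots> = (if int p dvd m then of_nat p else 0)"
  proof (cases "int p dvd m")
    case True then have "z m = 1" using z_eq_1_iff by simp
    then show ?thesis using True by simp
  next
    case False
    have "z m ^ p = 1" using z_pow z_eq_1_iff by simp
    then show ?thesis using False z_eq_1_iff sum_gp_strict[of "z m" p] by simp
  qed
  finally show ?thesis .
qed

abbreviation "L a \<equiv> Legendre a (int p)"

lemma euler: "[L a = a ^ ((p - 1) div 2)] (mod int p)"
  using euler_criterion[OF pp p_gt2] .

lemma L_vals: "L a \<in> {-1, 0, 1}" unfolding Legendre_def by auto

lemma L_zero_iff: "L a = 0 \<longleftrightarrow> int p dvd a"
  unfolding Legendre_def by (auto simp: cong_0_iff)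

lemma L_nz: "\<not> int p dvd a \<Longrightarrow> L a = 1 \<or> L a = -1"
  using L_vals[of a] L_zero_iff[of a] by auto

lemma L_one_iff: "\<not> int p dvd a \<Longrightarrow> L a = 1 \<longleftrightarrow> QuadRes (int p) a"
  unfolding Legendre_def by (auto simp: cong_0_iff)

lemma small_cong_eq:
  assumes "x \<in> {-1,0,1::int}" "y \<in> {-1,0,1}" "[x = y] (mod int p)"
  shows "x = y"
proof -
  have "int p dvd (x - y)" using assms(3) by (simp add: cong_iff_dvd_diff)
  moreover have "\<bar>x - y\<bar> < int p" using assms(1,2) p_gt2 by auto
  ultimately have "x - y = 0"
    using dvd_imp_le_int[of "x - y" "int p"] by (cases "x - y = 0") auto
  then show ?thesis by simp
qed

lemma L_mult: "L (a * b) = L a * L b"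
proof -
  have "[L (a*b) = (a*b) ^ ((p - 1) div 2)] (mod int p)" by (rule euler)
  also have "(a*b) ^ ((p - 1) div 2) = a ^ ((p - 1) div 2) * b ^ ((p - 1) div 2)"
    by (simp add: power_mult_distrib)
  also have "[\<dots> = L a * L b] (mod int p)"
    using cong_mult[OF euler[of a] euler[of b]] by (simp add: cong_sym)
  finally have "[L (a*b) = L a * L b] (mod int p)" .
  moreover have "L a * L b \<in> {-1,0,1}" using L_vals[of a] L_vals[of b] by auto
  ultimately show ?thesis using small_cong_eq L_vals by blast
qed

lemma L_minus1: "L (-1) = (-1) ^ ((p - 1) div 2)"
proof -
  have "(-1::int) ^ ((p - 1) div 2) \<in> {-1,0,1}" by (cases "even ((p - 1) div 2)") auto
  then show ?thesis using small_cong_eq[OF L_vals _ euler[of "-1"]] by blast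
qed

lemma L_cong: "[a = b] (mod int p) \<Longrightarrow> L a = L b"
proof -
  assume h: "[a = b] (mod int p)"
  have "QuadRes (int p) a \<longleftrightarrow> QuadRes (int p) b"
    unfolding QuadRes_def using h cong_sym cong_trans by meson
  moreover have "[a = 0] (mod int p) \<longleftrightarrow> [b = 0] (mod int p)"
    using h cong_sym cong_trans by meson
  ultimately show ?thesis unfolding Legendre_def by simp
qed

lemma L_mod: "L (a mod int p) = L a"
  by (rule L_cong) (simp add: cong_def)

lemma L_pow: "L (a ^ n) = L a ^ n"
proof (induction n)
  case 0
  have "\<not> int p dvd 1" using p_gt2 by simp
  moreover have "QuadRes (int p) 1" unfolding QuadRes_def by (rule exI[of _ 1]) simp
  ultimately show ?case using L_one_iff by simp
next
  case (Suc n) then show ?case by (simp add: L_mult)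
qed

lemma L_sq: "\<not> int p dvd a \<Longrightarrow> L (a * a * t) = L t"
  using L_nz[of a] by (auto simp: L_mult)

lemma not_dvd_mult: "\<not> int p dvd a \<Longrightarrow> \<not> int p dvd b \<Longrightarrow> \<not> int p dvd (a * b)"
  using pp by (simp add: prime_dvd_mult_iff)

lemma pow_cong1: "\<not> int p dvd a \<Longrightarrow> [a ^ (p - 1) = 1] (mod int p)"
proof -
  assume a: "\<not> int p dvd a"
  have "p - 1 = 2 * ((p - 1) div 2)" using op p_gt2 by simp
  then have "a ^ (p - 1) = (a ^ ((p - 1) div 2))^2" by (metis power_mult mult.commute)
  moreover have "[(a ^ ((p - 1) div 2))^2 = (L a)^2] (mod int p)"
    using cong_pow[OF euler[of a], of 2] by (simp add: cong_sym)
  moreover have "(L a)^2 = 1" using L_nz[OF a] by auto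
  ultimately show ?thesis by simp
qed

abbreviation "rr \<equiv> (p - 1) div 2"
abbreviation "UU \<equiv> {1..<int p}"
abbreviation "RR \<equiv> {k\<in>UU. L k = 1}"
abbreviation "NN \<equiv> {k\<in>UU. L k = -1}"

lemma p_eq: "int p = 2 * int rr + 1"
proof -
  obtain m where "p = 2 * m + 1" using op oddE by blast
  then show ?thesis by simp
qed

lemma UU_ndvd: "k \<in> UU \<Longrightarrow> \<not> int p dvd k"
  using zdvd_imp_le by fastforce

lemma fold_sq:
  assumes "\<not> int p dvd y"
  shows "\<exists>x. 1 \<le> x \<and> x \<le> int rr \<and> [x^2 = y^2] (mod int p)"
proof -
  define u where "u = y mod int p"
  have "u \<noteq> 0" using assms unfolding u_def by (simp add: dvd_eq_mod_eq_0)
  then have u: "0 < u" "u < int p" using pos_mod_sign[of "int p" y] pos_mod_bound[of "int p" y] p_pos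
    unfolding u_def by linarith+
  have uy: "[u = y] (mod int p)" unfolding u_def by (simp add: cong_def)
  show ?thesis
  proof (cases "u \<le> int rr")
    case True
    then show ?thesis using u cong_pow[OF uy, of 2] by (intro exI[of _ u]) auto
  next
    case False
    have "(int p - u)^2 = u^2 + int p * (int p - 2 * u)" by (simp add: power2_eq_square algebra_simps)
    then have "[(int p - u)^2 = u^2] (mod int p)" by (simp add: cong_def)
    then have "[(int p - u)^2 = y^2] (mod int p)" using cong_pow[OF uy, of 2] cong_trans by blast
    then show ?thesis using False u p_eq by (intro exI[of _ "int p - u"]) auto
  qed
qed

lemma sq_inj:
  assumes "\<not> int p dvd c" "0 \<le> x" "x \<le> int rr" "0 \<le> y" "y \<le> int rr"
    and "[c * x^2 = c * y^2] (mod int p)"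
  shows "x = y"
proof -
  have "int p dvd c * ((x - y) * (x + y))" using assms(6)
    by (simp add: cong_iff_dvd_diff power2_eq_square algebra_simps)
  then have "int p dvd (x - y) \<or> int p dvd (x + y)" using assms(1) pp
    by (simp add: prime_dvd_mult_iff)
  moreover have "\<bar>x - y\<bar> < int p" "0 \<le> x + y" "x + y < int p" using assms(2-5) p_eq by auto
  ultimately have "x - y = 0 \<or> x + y = 0"
    using dvd_imp_le_int[of "x - y" "int p"] dvd_imp_le_int[of "x + y" "int p"] by fastforce
  then show ?thesis using assms(2,4) by auto
qed

lemma RR_eq: "RR = (\<lambda>x. x^2 mod int p) ` {1..int rr}"
proof
  show "RR \<subseteq> (\<lambda>x. x^2 mod int p) ` {1..int rr}"
  proof
    fix k assume k: "k \<in> RR"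
    then have nd: "\<not> int p dvd k" using UU_ndvd by auto
    then have "QuadRes (int p) k" using k L_one_iff by auto
    then obtain y where y: "[y^2 = k] (mod int p)" unfolding QuadRes_def by auto
    have "\<not> int p dvd y"
    proof
      assume "int p dvd y"
      then have "int p dvd y^2" by (simp add: power2_eq_square)
      then show False using y nd by (simp add: cong_dvd_iff)
    qed
    then obtain x where x: "1 \<le> x" "x \<le> int rr" "[x^2 = y^2] (mod int p)" using fold_sq by blast
    have "[x^2 = k] (mod int p)" using x(3) y cong_trans by blast
    then have "x^2 mod int p = k" using k by (auto simp: cong_def)
    then show "k \<in> (\<lambda>x. x^2 mod int p) ` {1..int rr}" using x by auto
  qed
next
  show "(\<lambda>x. x^2 mod int p) ` {1..int rr} \<subseteq> RR"
  proof
    fix k assume "k \<in> (\<lambda>x. x^2 mod int p) ` {1..int rr}"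
    then obtain x where x: "1 \<le> x" "x \<le> int rr" "k = x^2 mod int p" by auto
    have "\<not> int p dvd x" using x(1,2) p_eq zdvd_imp_le by fastforce
    then have nd: "\<not> int p dvd x^2" using pp by (simp add: prime_dvd_power_iff)
    then have "x^2 mod int p \<noteq> 0" by (simp add: dvd_eq_mod_eq_0)
    moreover have "0 \<le> x^2 mod int p" "x^2 mod int p < int p" using p_pos by simp_all
    ultimately have "k \<in> UU" using x(3) by simp
    moreover have "QuadRes (int p) k" unfolding QuadRes_def x(3) by (auto simp: cong_def)
    moreover have "\<not> int p dvd k" using nd x(3) by (simp add: dvd_eq_mod_eq_0)
    ultimately show "k \<in> RR" using L_one_iff by auto
  qed
qed

lemma card_RR: "card RR = rr"
proof -
  have "inj_on (\<lambda>x. x^2 mod int p) {1..int rr}"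
  proof
    fix x y assume "x \<in> {1..int rr}" "y \<in> {1..int rr}" "x^2 mod int p = y^2 mod int p"
    then show "x = y" using sq_inj[of 1 x y] p_gt2 by (auto simp: cong_def)
  qed
  then show ?thesis unfolding RR_eq by (simp add: card_image)
qed

lemma UU_split: "UU = RR \<union> NN"
proof
  show "UU \<subseteq> RR \<union> NN"
  proof
    fix k assume "k \<in> UU"
    then show "k \<in> RR \<union> NN" using L_nz[OF UU_ndvd[of k]] by blast
  qed
qed auto

lemma UU_disj: "RR \<inter> NN = {}" by auto
lemma finRR: "finite RR" by (rule finite_subset[of _ UU]) auto
lemma finNN: "finite NN" by (rule finite_subset[of _ UU]) auto

lemma card_NN: "card NN = rr"
proof -
  have "card (RR \<union> NN) = card RR + card NN" by (rule card_Un_disjoint[OF finRR finNN UU_disj])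
  then have "card UU = card RR + card NN" by (simp only: UU_split[symmetric])
  moreover have "card UU = p - 1" by simp
  moreover have "p = 2 * rr + 1" using p_eq by linarith
  ultimately show ?thesis using card_RR by linarith
qed

lemma sum_L: "(\<Sum>k\<in>UU. L k) = 0"
proof -
  have "(\<Sum>k\<in>RR \<union> NN. L k) = (\<Sum>k\<in>RR. L k) + (\<Sum>k\<in>NN. L k)"
    by (rule sum.union_disjoint[OF finRR finNN UU_disj])
  then have "(\<Sum>k\<in>UU. L k) = (\<Sum>k\<in>RR. L k) + (\<Sum>k\<in>NN. L k)"
    by (simp only: UU_split[symmetric])
  also have "\<dots> = int (card RR) - int (card NN)" by simp
  finally show ?thesis using card_RR card_NN by simp
qed

lemma UU_insert: "{0..<int p} = insert 0 UU" using p_pos by auto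

lemma sum_UU_zm: "(\<Sum>a\<in>UU. z (a * m)) = (if int p dvd m then of_nat p else 0) - 1"
proof -
  have "(\<Sum>a\<in>{0..<int p}. z (a * m)) = z (0 * m) + (\<Sum>a\<in>UU. z (a * m))"
    unfolding UU_insert by (rule sum.insert) auto
  then show ?thesis using geom[of m] by simp
qed

lemma sum_UU_z: "(\<Sum>a\<in>UU. z a) = -1"
  using sum_UU_zm[of 1] p_gt2 by simp

definition eta where "eta = (\<Sum>k\<in>RR. z k)"

lemma eta_NN: "(\<Sum>k\<in>NN. z k) = - 1 - eta"
proof -
  have "(\<Sum>k\<in>RR \<union> NN. z k) = (\<Sum>k\<in>RR. z k) + (\<Sum>k\<in>NN. z k)"
    by (rule sum.union_disjoint[OF finRR finNN UU_disj])
  then have "(\<Sum>k\<in>UU. z k) = eta + (\<Sum>k\<in>NN. z k)" by (simp only: UU_split[symmetric] eta_def)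
  then show ?thesis using sum_UU_z by simp
qed

definition GG where "GG = (\<Sum>k\<in>UU. of_int (L k) * z k)"

lemma GG_eta: "GG = 2 * eta + 1"
proof -
  have "(\<Sum>k\<in>RR \<union> NN. of_int (L k) * z k) = (\<Sum>k\<in>RR. of_int (L k) * z k) + (\<Sum>k\<in>NN. of_int (L k) * z k)"
    by (rule sum.union_disjoint[OF finRR finNN UU_disj])
  then have "GG = (\<Sum>k\<in>RR. of_int (L k) * z k) + (\<Sum>k\<in>NN. of_int (L k) * z k)"
    by (simp only: GG_def UU_split[symmetric])
  also have "\<dots> = eta - (\<Sum>k\<in>NN. z k)" unfolding eta_def by (simp add: sum_negf)
  finally show ?thesis using eta_NN by simp
qed

lemma mult_bij: assumes "a \<in> UU" shows "bij_betw (\<lambda>t. a * t mod int p) UU UU"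
proof -
  have inj: "inj_on (\<lambda>t. a * t mod int p) UU"
  proof
    fix x y assume xy: "x \<in> UU" "y \<in> UU" "a * x mod int p = a * y mod int p"
    have "coprime a (int p)" using assms UU_ndvd pp
      by (metis coprime_commute prime_imp_coprime prime_nat_int_transfer)
    then have "[x = y] (mod int p)" using xy(3) cong_mult_lcancel unfolding cong_def by blast
    then show "x = y" using xy(1,2) by (simp add: cong_def)
  qed
  have sub: "(\<lambda>t. a * t mod int p) ` UU \<subseteq> UU"
  proof
    fix k assume "k \<in> (\<lambda>t. a * t mod int p) ` UU"
    then obtain t where t: "t \<in> UU" "k = a * t mod int p" by auto
    have "\<not> int p dvd a * t" using not_dvd_mult UU_ndvd assms t(1) by blast
    then have "a * t mod int p \<noteq> 0" by (simp add: dvd_eq_mod_eq_0)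
    moreover have "0 \<le> a * t mod int p" "a * t mod int p < int p" using p_pos by simp_all
    ultimately show "k \<in> UU" using t(2) by simp
  qed
  have "(\<lambda>t. a * t mod int p) ` UU = UU" by (rule endo_inj_surj[OF _ sub inj]) simp
  then show ?thesis using inj by (simp add: bij_betw_def)
qed

lemma inner: assumes a: "a \<in> UU"
  shows "(\<Sum>b\<in>UU. of_int (L a) * z a * (of_int (L b) * z b)) = (\<Sum>t\<in>UU. of_int (L t) * z (a * (1 + t)))"
proof -
  have "(\<Sum>b\<in>UU. of_int (L a) * z a * (of_int (L b) * z b))
      = (\<Sum>t\<in>UU. of_int (L a) * z a * (of_int (L (a * t mod int p)) * z (a * t mod int p)))"
    by (rule sum.reindex_bij_betw[OF mult_bij[OF a], symmetric])
  also have "\<dots> = (\<Sum>t\<in>UU. of_int (L t) * z (a * (1 + t)))"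
  proof (rule sum.cong[OF refl])
    fix t assume t: "t \<in> UU"
    have "L (a * t mod int p) = L a * L t" by (simp add: L_mod L_mult)
    moreover have "L a * L a = 1" using L_nz[OF UU_ndvd[OF a]] by auto
    moreover have "z a * z (a * t mod int p) = z (a * (1 + t))"
      by (simp add: z_mod z_add[symmetric] algebra_simps)
    ultimately show "of_int (L a) * z a * (of_int (L (a * t mod int p)) * z (a * t mod int p))
        = of_int (L t) * z (a * (1 + t))"
    proof -
      assume h1: "L (a * t mod int p) = L a * L t" and h2: "L a * L a = 1"
        and h3: "z a * z (a * t mod int p) = z (a * (1 + t))"
      have "of_int (L a) * z a * (of_int (L (a * t mod int p)) * z (a * t mod int p))
          = of_int (L a * L a) * of_int (L t) * (z a * z (a * t mod int p))"
        unfolding h1 by (simp add: algebra_simps)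
      then show ?thesis unfolding h2 h3 by simp
    qed
  qed
  finally show ?thesis .
qed

lemma GG_sq: "GG^2 = of_int (L (-1)) * of_nat p"
proof -
  have "GG^2 = (\<Sum>a\<in>UU. \<Sum>b\<in>UU. of_int (L a) * z a * (of_int (L b) * z b))"
    unfolding GG_def power2_eq_square sum_product ..
  also have "\<dots> = (\<Sum>a\<in>UU. \<Sum>t\<in>UU. of_int (L t) * z (a * (1 + t)))"
    by (rule sum.cong[OF refl]) (rule inner)
  also have "\<dots> = (\<Sum>t\<in>UU. of_int (L t) * (\<Sum>a\<in>UU. z (a * (1 + t))))"
    by (subst sum.swap) (simp add: sum_distrib_left)
  also have "\<dots> = (\<Sum>t\<in>UU. of_int (L t) * ((if t = int p - 1 then of_nat p else 0) - 1))"
  proof (rule sum.cong[OF refl])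
    fix t assume t: "t \<in> UU"
    have "int p dvd (1 + t) \<longleftrightarrow> t = int p - 1"
    proof
      assume "int p dvd (1 + t)"
      moreover have "0 < 1 + t" "1 + t \<le> int p" using t by auto
      ultimately have "int p \<le> 1 + t" using zdvd_imp_le by blast
      then show "t = int p - 1" using t by auto
    qed auto
    then show "of_int (L t) * (\<Sum>a\<in>UU. z (a * (1 + t))) =
        of_int (L t) * ((if t = int p - 1 then of_nat p else 0) - 1)"
      by (simp add: sum_UU_zm)
  qed
  also have "\<dots> = (\<Sum>t\<in>UU. (if t = int p - 1 then of_int (L t) * of_nat p else 0) - of_int (L t))"
    by (rule sum.cong[OF refl]) (simp add: algebra_simps)
  also have "\<dots> = (\<Sum>t\<in>UU. (if t = int p - 1 then of_int (L t) * of_nat p else 0)) - (\<Sum>t\<in>UU. of_int (L t))"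
    by (rule sum_subtractf)
  also have "\<dots> = of_int (L (int p - 1)) * of_nat p"
  proof -
    have "(\<Sum>t\<in>UU. (of_int (L t) :: complex)) = of_int (\<Sum>t\<in>UU. L t)" by simp
    also have "\<dots> = 0" using sum_L by simp
    finally have "(\<Sum>t\<in>UU. (of_int (L t) :: complex)) = 0" .
    moreover have "int p - 1 \<in> UU" using p_gt2 by auto
    ultimately show ?thesis by (simp add: sum.delta')
  qed
  also have "L (int p - 1) = L (-1)" by (rule L_cong) (simp add: cong_def)
  finally show ?thesis .
qed

lemma sqrt_sq_c: "(complex_of_real (sqrt (real p)))^2 = of_nat p"
  by (metis of_real_of_nat_eq of_real_power real_sqrt_pow2 of_nat_0_le_iff)

lemma se_sq: "(sqrt_eps p)^2 = of_int (L (-1)) * of_nat p"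
proof (cases "even rr")
  case True
  then obtain m where "rr = 2 * m" by blast
  then have "p mod 4 = 1" using p_eq by presburger
  then show ?thesis using True sqrt_sq_c by (simp add: sqrt_eps_def L_minus1 power_mult_distrib)
next
  case False
  then obtain m where "rr = 2 * m + 1" using oddE by blast
  then have "p mod 4 = 3" using p_eq by presburger
  then show ?thesis using False sqrt_sq_c by (simp add: sqrt_eps_def L_minus1 power_mult_distrib)
qed

lemma GG_pm: "GG = sqrt_eps p \<or> GG = - sqrt_eps p"
proof -
  have "(GG - sqrt_eps p) * (GG + sqrt_eps p) = 0"
    using GG_sq se_sq by (simp add: algebra_simps power2_eq_square)
  then show ?thesis by (simp add: eq_neg_iff_add_eq_0)
qed

lemma eta_qr: "of_int a + of_int b * eta \<in> quad_ring p"
proof (cases "GG = sqrt_eps p")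
  case True
  then have "(1 + sqrt_eps p) / 2 = eta + 1" using GG_eta by (simp add: field_simps)
  then have "of_int a + of_int b * eta = of_int (a - b) + of_int b * ((1 + sqrt_eps p) / 2)"
    by (simp add: algebra_simps)
  then show ?thesis unfolding quad_ring_def by blast
next
  case False
  then have "GG = - sqrt_eps p" using GG_pm by simp
  then have "sqrt_eps p = - (2 * eta + 1)" using GG_eta by simp
  then have "(1 + sqrt_eps p) / 2 = - eta" by simp
  then have "of_int a + of_int b * eta = of_int a + of_int (- b) * ((1 + sqrt_eps p) / 2)"
    by (simp add: algebra_simps)
  then show ?thesis unfolding quad_ring_def by blast
qed

end

locale oddpc = oddp + fixes c :: int assumes cnd: "\<not> int p dvd c"
begin

definition "AA = (\<lambda>j. c * j^2 mod int p) ` {1..int rr}"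
definition "phi s a = s * a mod int p"
definition "Fam i = {S. S \<subseteq> AA \<and> card S + i = card AA}"
definition "NF i k = card {S \<in> Fam i. \<Sum>S mod int p = k}"

lemma finAA: "finite AA" unfolding AA_def by simp

lemma AA_range: "a \<in> AA \<Longrightarrow> 0 \<le> a \<and> a < int p"
  unfolding AA_def using p_pos by auto

lemma finFam: "finite (Fam i)"
  by (rule finite_subset[of _ "Pow AA"]) (auto simp: Fam_def finAA)

lemma phi_AA:
  assumes s: "QuadRes (int p) s" "\<not> int p dvd s"
  shows "phi s ` AA \<subseteq> AA"
proof
  fix b assume "b \<in> phi s ` AA"
  then obtain j where j: "1 \<le> j" "j \<le> int rr" "b = phi s (c * j^2 mod int p)"
    unfolding AA_def by auto
  obtain y where y: "[y^2 = s] (mod int p)" using s(1) unfolding QuadRes_def by auto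
  have "\<not> int p dvd y"
  proof
    assume "int p dvd y"
    then have "int p dvd y^2" by (simp add: power2_eq_square)
    then show False using y s(2) by (simp add: cong_dvd_iff)
  qed
  moreover have "\<not> int p dvd j" using j(1,2) p_eq zdvd_imp_le by fastforce
  ultimately have "\<not> int p dvd (y * j)" using not_dvd_mult by blast
  then obtain x where x: "1 \<le> x" "x \<le> int rr" "[x^2 = (y * j)^2] (mod int p)"
    using fold_sq by blast
  have "[s * (c * j^2 mod int p) = s * (c * j^2)] (mod int p)"
    by (simp add: cong_def mod_mult_right_eq)
  also have "[s * (c * j^2) = y^2 * (c * j^2)] (mod int p)"
    using cong_mult[OF cong_sym[OF y] cong_refl[of "c * j^2"]] .
  also have "y^2 * (c * j^2) = c * (y * j)^2" by (simp add: power_mult_distrib)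
  also have "[c * (y * j)^2 = c * x^2] (mod int p)"
    using cong_mult[OF cong_refl[of c] cong_sym[OF x(3)]] .
  finally have "b = c * x^2 mod int p" using j(3) unfolding phi_def cong_def by simp
  then show "b \<in> AA" unfolding AA_def using x by auto
qed

lemma phi_inj:
  assumes "\<not> int p dvd s"
  shows "inj_on (phi s) AA"
proof
  fix x y assume xy: "x \<in> AA" "y \<in> AA" "phi s x = phi s y"
  have "coprime s (int p)" using assms pp
    by (metis coprime_commute prime_imp_coprime prime_nat_int_transfer)
  then have "[x = y] (mod int p)" using xy(3) cong_mult_lcancel unfolding cong_def phi_def by blast
  then show "x = y" using AA_range[OF xy(1)] AA_range[OF xy(2)] by (simp add: cong_def)
qed

lemma phi_surj:
  assumes "QuadRes (int p) s" "\<not> int p dvd s"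
  shows "phi s ` AA = AA"
  by (rule endo_inj_surj[OF finAA phi_AA[OF assms] phi_inj[OF assms(2)]])

lemma Phi_Fam:
  assumes s: "QuadRes (int p) s" "\<not> int p dvd s" and S: "S \<in> Fam i"
  shows "phi s ` S \<in> Fam i"
proof -
  have sub: "S \<subseteq> AA" using S unfolding Fam_def by auto
  have "card (phi s ` S) = card S"
    by (rule card_image) (rule inj_on_subset[OF phi_inj[OF s(2)] sub])
  moreover have "phi s ` S \<subseteq> AA" using phi_AA[OF s] sub by blast
  ultimately show ?thesis using S unfolding Fam_def by auto
qed

lemma Phi_inj:
  assumes "\<not> int p dvd s"
  shows "inj_on (image (phi s)) (Fam i)"
  by (rule inj_on_subset[OF inj_on_image_Pow[OF phi_inj[OF assms]]]) (auto simp: Fam_def)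

lemma Phi_surj:
  assumes s: "QuadRes (int p) s" "\<not> int p dvd s"
  shows "image (phi s) ` Fam i = Fam i"
  by (rule endo_inj_surj[OF finFam _ Phi_inj[OF s(2)]]) (auto intro: Phi_Fam[OF s])

lemma sum_phi:
  assumes s: "\<not> int p dvd s" and S: "S \<subseteq> AA"
  shows "[\<Sum>(phi s ` S) = s * \<Sum>S] (mod int p)"
proof -
  have "\<Sum>(phi s ` S) = (\<Sum>a\<in>S. phi s a)"
    by (rule sum.reindex_cong[OF inj_on_subset[OF phi_inj[OF s] S] refl refl])
  also have "[(\<Sum>a\<in>S. phi s a) = (\<Sum>a\<in>S. s * a)] (mod int p)"
    by (rule cong_sum) (simp add: phi_def cong_def)
  also have "(\<Sum>a\<in>S. s * a) = s * \<Sum>S" by (simp add: sum_distrib_left)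
  finally show ?thesis .
qed

lemma NF_inv:
  assumes s: "QuadRes (int p) s" "\<not> int p dvd s" and k: "0 \<le> k" "k < int p"
  shows "NF i ((s * k) mod int p) = NF i k"
proof -
  let ?B = "\<lambda>k. {S \<in> Fam i. \<Sum>S mod int p = k}"
  have cop: "coprime s (int p)" using s(2) pp
    by (metis coprime_commute prime_imp_coprime prime_nat_int_transfer)
  have "?B ((s * k) mod int p) = image (phi s) ` ?B k"
  proof
    show "image (phi s) ` ?B k \<subseteq> ?B ((s * k) mod int p)"
    proof
      fix T assume "T \<in> image (phi s) ` ?B k"
      then obtain S where S: "S \<in> Fam i" "\<Sum>S mod int p = k" "T = phi s ` S" by auto
      have "T \<in> Fam i" using Phi_Fam[OF s S(1)] S(3) by simp
      moreover have "[\<Sum>T = s * \<Sum>S] (mod int p)" using sum_phi[OF s(2)] S unfolding Fam_def by auto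
      then have "\<Sum>T mod int p = (s * k) mod int p" using S(2) unfolding cong_def
        by (metis mod_mult_right_eq)
      ultimately show "T \<in> ?B ((s * k) mod int p)" by simp
    qed
  next
    show "?B ((s * k) mod int p) \<subseteq> image (phi s) ` ?B k"
    proof
      fix T assume T: "T \<in> ?B ((s * k) mod int p)"
      then have "T \<in> image (phi s) ` Fam i" using Phi_surj[OF s] by simp
      then obtain S where S: "S \<in> Fam i" "T = phi s ` S" by auto
      have "[\<Sum>T = s * \<Sum>S] (mod int p)" using sum_phi[OF s(2)] S unfolding Fam_def by auto
      then have "[s * \<Sum>S = s * k] (mod int p)" using T unfolding cong_def by simp
      then have "[\<Sum>S = k] (mod int p)" using cong_mult_lcancel[OF cop] by blast
      then have "\<Sum>S mod int p = k" using k unfolding cong_def by simp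
      then show "T \<in> image (phi s) ` ?B k" using S by auto
    qed
  qed
  moreover have "inj_on (image (phi s)) (?B k)"
    by (rule inj_on_subset[OF Phi_inj[OF s(2)]]) auto
  ultimately show ?thesis unfolding NF_def by (simp add: card_image)
qed

lemma W_eq: "(\<Sum>S\<in>Fam i. z (\<Sum>S)) = (\<Sum>k\<in>{0..<int p}. of_nat (NF i k) * z k)"
proof -
  have "(\<Sum>S\<in>Fam i. z (\<Sum>S)) = (\<Sum>k\<in>{0..<int p}. \<Sum>S\<in>{S. S \<in> Fam i \<and> \<Sum>S mod int p = k}. z (\<Sum>S))"
    by (rule sum.group[symmetric]) (use finFam p_pos in auto)
  also have "\<dots> = (\<Sum>k\<in>{0..<int p}. of_nat (NF i k) * z k)"
  proof (rule sum.cong[OF refl])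
    fix k assume "k \<in> {0..<int p}"
    have "(\<Sum>S\<in>{S. S \<in> Fam i \<and> \<Sum>S mod int p = k}. z (\<Sum>S))
        = (\<Sum>S\<in>{S. S \<in> Fam i \<and> \<Sum>S mod int p = k}. z k)"
    proof (rule sum.cong[OF refl])
      fix S assume "S \<in> {S. S \<in> Fam i \<and> \<Sum>S mod int p = k}"
      then have "\<Sum>S mod int p = k" by simp
      then show "z (\<Sum>S) = z k" using z_mod[of "\<Sum>S"] by simp
    qed
    also have "\<dots> = of_nat (NF i k) * z k" unfolding NF_def by simp
    finally show "(\<Sum>S\<in>{S. S \<in> Fam i \<and> \<Sum>S mod int p = k}. z (\<Sum>S)) = of_nat (NF i k) * z k" .
  qed
  finally show ?thesis .
qed

lemma NN_ne: "NN \<noteq> {}"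
proof
  assume "NN = {}"
  then have "rr = 0" using card_NN by (metis card.empty)
  then show False using p_gt2 p_eq by linarith
qed

lemma W_qr: "(\<Sum>S\<in>Fam i. z (\<Sum>S)) \<in> quad_ring p"
proof -
  obtain k0 where k0: "k0 \<in> NN" using NN_ne by blast
  have k0nd: "\<not> int p dvd k0" using k0 UU_ndvd by blast
  have R: "(\<Sum>k\<in>RR. of_nat (NF i k) * z k) = of_nat (NF i 1) * eta"
  proof -
    have "(\<Sum>k\<in>RR. of_nat (NF i k) * z k) = (\<Sum>k\<in>RR. of_nat (NF i 1) * z k)"
    proof (rule sum.cong[OF refl])
      fix k assume k: "k \<in> RR"
      then have nd: "\<not> int p dvd k" using UU_ndvd by blast
      then have "QuadRes (int p) k" using k L_one_iff by blast
      then have "NF i ((k * 1) mod int p) = NF i 1" using NF_inv[of k 1 i] nd p_gt2 by simp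
      moreover have "(k * 1) mod int p = k" using k by simp
      ultimately show "of_nat (NF i k) * z k = of_nat (NF i 1) * z k" by simp
    qed
    then show ?thesis unfolding eta_def by (simp add: sum_distrib_left)
  qed
  have N: "(\<Sum>k\<in>NN. of_nat (NF i k) * z k) = of_nat (NF i k0) * (- 1 - eta)"
  proof -
    have "(\<Sum>k\<in>NN. of_nat (NF i k) * z k) = (\<Sum>k\<in>NN. of_nat (NF i k0) * z k)"
    proof (rule sum.cong[OF refl])
      fix k assume k: "k \<in> NN"
      then have nd: "\<not> int p dvd k" using UU_ndvd by blast
      define s where "s = k * k0 ^ (p - 2)"
      have "odd (p - 2)" using op p_gt2 by simp
      then have "L s = 1" using k k0 unfolding s_def by (simp add: L_mult L_pow)
      then have s1a: "\<not> int p dvd s" using L_zero_iff[of s] by auto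
      then have s1: "\<not> int p dvd s" "QuadRes (int p) s" using L_one_iff[of s] \<open>L s = 1\<close> by auto
      have "[s * k0 = k * k0 ^ (p - 1)] (mod int p)"
      proof -
        have "p - 1 = Suc (p - 2)" using p_gt2 by simp
        then show ?thesis unfolding s_def by (simp add: algebra_simps)
      qed
      also have "[k * k0 ^ (p - 1) = k * 1] (mod int p)"
        using cong_mult[OF cong_refl[of k] pow_cong1[OF k0nd]] .
      finally have "(s * k0) mod int p = k" using k unfolding cong_def by simp
      moreover have "NF i (s * k0 mod int p) = NF i k0" using NF_inv[OF s1(2) s1(1), of k0] k0 by simp
      ultimately show "of_nat (NF i k) * z k = of_nat (NF i k0) * z k" by simp
    qed
    then show ?thesis using eta_NN by (simp add: sum_distrib_left[symmetric])
  qed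
  have "{0..<int p} = insert 0 (RR \<union> NN)" by (simp only: UU_insert UU_split[symmetric])
  then have "(\<Sum>k\<in>{0..<int p}. of_nat (NF i k) * z k)
      = of_nat (NF i 0) * z 0 + ((\<Sum>k\<in>RR. of_nat (NF i k) * z k) + (\<Sum>k\<in>NN. of_nat (NF i k) * z k))"
    using finRR finNN UU_disj by (simp add: sum.union_disjoint)
  also have "\<dots> = of_int (int (NF i 0) - int (NF i k0)) + of_int (int (NF i 1) - int (NF i k0)) * eta"
    unfolding R N by (simp add: algebra_simps)
  finally show ?thesis unfolding W_eq by (simp only: eta_qr)
qed

lemma coeff_Q: "coeff (\<Prod>a\<in>AA. [:- z a, 1:]) i \<in> quad_ring p"
proof -
  have "coeff (\<Prod>a\<in>AA. [:- z a, 1:]) i = (\<Sum>S\<in>Fam i. \<Prod>a\<in>S. - z a)"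
    unfolding Fam_def by (rule coeff_prod_linear[OF finAA])
  also have "\<dots> = (\<Sum>S\<in>Fam i. (-1) ^ (card AA - i) * z (\<Sum>S))"
  proof (rule sum.cong[OF refl])
    fix S assume S: "S \<in> Fam i"
    then have fS: "finite S" using finAA finite_subset unfolding Fam_def by auto
    have "(\<Prod>a\<in>S. - z a) = (-1) ^ card S * (\<Prod>a\<in>S. z a)" by (rule prod_neg[OF fS])
    also have "\<dots> = (-1) ^ (card AA - i) * z (\<Sum>S)"
    proof -
      have "card S = card AA - i" using S unfolding Fam_def by auto
      then show ?thesis using z_sum[OF fS, of id] by simp
    qed
    finally show "(\<Prod>a\<in>S. - z a) = (-1) ^ (card AA - i) * z (\<Sum>S)" .
  qed
  also have "\<dots> = (-1) ^ (card AA - i) * (\<Sum>S\<in>Fam i. z (\<Sum>S))" by (simp add: sum_distrib_left)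
  finally show ?thesis using qr_sign[OF W_qr] by simp
qed

end


lemma lin_prod_facts:
  fixes t :: "nat \<Rightarrow> complex" and n :: nat
  defines "P \<equiv> \<Prod>j<n. [:- t j, 1:]"
  shows "degree P = n" "coeff P n = 1" "\<And>j. j < n \<Longrightarrow> poly P (t j) = 0"
proof -
  show d: "degree P = n" unfolding P_def
    by (subst degree_prod_eq_sum_degree) auto
  have "lead_coeff P = 1" unfolding P_def lead_coeff_prod by simp
  then show "coeff P n = 1" using d by simp
  fix j assume "j < n"
  then show "poly P (t j) = 0" unfolding P_def poly_prod
    by (intro prod_zero) (auto intro: bexI[of _ j])
qed

lemma root_sum:
  fixes t :: "nat \<Rightarrow> complex" and n :: nat
  defines "P \<equiv> \<Prod>j<n. [:- t j, 1:]"
  assumes j: "j < n"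
  shows "(\<Sum>i<n. t j ^ i * coeff P i) = - (t j ^ n)"
proof -
  have "0 = poly P (t j)" using lin_prod_facts(3)[OF j] unfolding P_def by simp
  also have "\<dots> = (\<Sum>i\<le>n. coeff P i * t j ^ i)"
    unfolding poly_altdef using lin_prod_facts(1) unfolding P_def by simp
  also have "\<dots> = (\<Sum>i<n. t j ^ i * coeff P i) + t j ^ n"
    using lin_prod_facts(2) unfolding P_def by (simp add: lessThan_Suc_atMost[symmetric] mult.commute)
  finally show ?thesis by (simp add: eq_neg_iff_add_eq_0)
qed

lemma vander_det:
  fixes t :: "nat \<Rightarrow> complex"
  assumes dist: "\<And>i j. i < n \<Longrightarrow> j < n \<Longrightarrow> t i = t j \<Longrightarrow> i = j"
  shows "det (mat n n (\<lambda>(j, k). t j ^ k)) \<noteq> 0"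
proof
  let ?V = "mat n n (\<lambda>(j, k). t j ^ k)"
  assume "det ?V = 0"
  then obtain v where v: "v \<in> carrier_vec n" "v \<noteq> 0\<^sub>v n" "?V *\<^sub>v v = 0\<^sub>v n"
    using det_0_iff_vec_prod_zero_field[of ?V n] by auto
  define q where "q = (\<Sum>k<n. monom (v $ k) k)"
  have cq: "coeff q m = (if m < n then v $ m else 0)" for m
    unfolding q_def coeff_sum coeff_monom by (auto simp: sum.delta')
  have pq: "poly q (t j) = 0" if "j < n" for j
  proof -
    have "poly q (t j) = (\<Sum>k<n. v $ k * t j ^ k)" unfolding q_def poly_sum poly_monom ..
    also have "\<dots> = (?V *\<^sub>v v) $ j" using that v(1)
      by (simp add: scalar_prod_def lessThan_atLeast0 mult.commute)
    also have "\<dots> = 0" using v(3) that by simp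
    finally show ?thesis .
  qed
  have "q = 0"
  proof (cases "n = 0")
    case True then show ?thesis unfolding q_def by simp
  next
    case False
    have dq: "degree q < n"
    proof -
      have "degree q \<le> n - 1" by (rule degree_le) (use cq False in auto)
      then show ?thesis using False by simp
    qed
    have ct: "card (t ` {..<n}) = n"
      by (subst card_image) (auto intro!: inj_onI dist)
    show ?thesis by (rule poly_eqI_degree[of "t ` {..<n}"]) (use pq dq ct in auto)
  qed
  then have "v = 0\<^sub>v n"
    using cq v(1) by (intro eq_vecI) (auto simp: fun_eq_iff, metis coeff_0)
  then show False using v(2) by simp
qed

lemma companion:
  fixes t :: "nat \<Rightarrow> complex"
  assumes dist: "\<And>i j. i < n \<Longrightarrow> j < n \<Longrightarrow> t i = t j \<Longrightarrow> i = j"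
    and j: "j < n" and k: "k < n"
  shows "(the (mat_inverse (mat n n (\<lambda>(j, k). t j ^ k))) * mat n n (\<lambda>(j, k). if j = k then t j else 0)
          * mat n n (\<lambda>(j, k). t j ^ k)) $$ (j, k) =
         (if k + 1 < n then (if j = k + 1 then 1 else 0) else - coeff (\<Prod>j<n. [:- t j, 1:]) j)"
proof -
  let ?V = "mat n n (\<lambda>(j, k). t j ^ k)"
  let ?T = "mat n n (\<lambda>(j, k). if j = k then t j else 0)"
  let ?P = "\<Prod>j<n. [:- t j, 1:]"
  let ?C = "mat n n (\<lambda>(i, k). if k + 1 < n then (if i = k + 1 then 1 else 0) else - coeff ?P i)"
  have TV: "?T * ?V = ?V * ?C"
  proof (rule eq_matI)
    fix a b assume ab: "a < dim_row (?V * ?C)" "b < dim_col (?V * ?C)"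
    then have a: "a < n" and b: "b < n" by auto
    have "(?T * ?V) $$ (a, b) = (\<Sum>i\<in>{0..<n}. ?T $$ (a, i) * ?V $$ (i, b))"
      using a b by (simp add: scalar_prod_def)
    also have "\<dots> = (\<Sum>i\<in>{0..<n}. if a = i then t a * t a ^ b else 0)"
      by (rule sum.cong[OF refl]) (use a b in auto)
    also have "\<dots> = t a ^ (b + 1)" using a by (simp add: sum.delta)
    finally have l: "(?T * ?V) $$ (a, b) = t a ^ (b + 1)" .
    have r: "(?V * ?C) $$ (a, b) = (\<Sum>i<n. t a ^ i * ?C $$ (i, b))"
      using a b by (simp add: scalar_prod_def lessThan_atLeast0)
    show "(?T * ?V) $$ (a, b) = (?V * ?C) $$ (a, b)"
    proof (cases "b + 1 < n")
      case True
      have "(\<Sum>i<n. t a ^ i * ?C $$ (i, b)) = (\<Sum>i<n. if i = b + 1 then t a ^ (b + 1) else 0)"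
        by (rule sum.cong[OF refl]) (use True in auto)
      also have "\<dots> = t a ^ (b + 1)" using True by (simp add: sum.delta')
      finally show ?thesis using l r by simp
    next
      case False
      then have bn: "b + 1 = n" using b by simp
      have "(\<Sum>i<n. t a ^ i * ?C $$ (i, b)) = - (\<Sum>i<n. t a ^ i * coeff ?P i)"
        unfolding sum_negf[symmetric] by (rule sum.cong[OF refl]) (use False b in auto)
      also have "\<dots> = t a ^ n" using root_sum[OF a, of t] by simp
      finally have "(?V * ?C) $$ (a, b) = t a ^ n" using r by simp
      moreover have "t a ^ n = t a ^ (b + 1)" using bn by simp
      ultimately show ?thesis using l by simp
    qed
  qed auto
  have "det ?V \<noteq> 0" by (rule vander_det) (rule dist)
  then have "?V \<in> Units (ring_mat TYPE(complex) n ())"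
    by (intro det_non_zero_imp_unit) auto
  then obtain B where B: "mat_inverse ?V = Some B"
    using mat_inverse(1)[of ?V n, where b = "()"] by (cases "mat_inverse ?V") auto
  then have BV: "B * ?V = 1\<^sub>m n" and Bc: "B \<in> carrier_mat n n"
    using mat_inverse(2)[of ?V n] by auto
  have "the (mat_inverse ?V) * ?T * ?V = B * ?T * ?V" using B by simp
  also have "\<dots> = B * (?T * ?V)" by (rule assoc_mult_mat[OF Bc, of _ n _ n]) auto
  also have "\<dots> = B * (?V * ?C)" using TV by simp
  also have "\<dots> = (B * ?V) * ?C" by (rule assoc_mult_mat[OF Bc, of _ n _ n, symmetric]) auto
  also have "\<dots> = ?C" using BV by simp
  finally show ?thesis using j k by simp
qed


theorem theorem1:
  fixes p :: nat and c :: int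
  assumes "prime p" and "odd p"
    and "c = 1 \<or> \<not> QuadRes (int p) c"
  shows "\<forall>j < (p - 1) div 2 + 1. \<forall>k < (p - 1) div 2 + 1.
           (the (mat_inverse (V_mat p c)) * T_mat p c * V_mat p c) $$ (j, k) \<in> quad_ring p"
proof -
  interpret oddp p using assms(1,2) by unfold_locales
  have cnd: "\<not> int p dvd c"
  proof
    assume h: "int p dvd c"
    have "c \<noteq> 1"
    proof
      assume "c = 1"
      then have "int p dvd 1" using h by simp
      then show False using p_gt2 by simp
    qed
    then have "\<not> QuadRes (int p) c" using assms(3) by simp
    moreover have "QuadRes (int p) c" unfolding QuadRes_def
      by (rule exI[of _ 0]) (use h in \<open>simp add: cong_def dvd_eq_mod_eq_0\<close>)
    ultimately show False by simp
  qed
  interpret oddpc p c by unfold_locales (rule cnd)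
  define t where "t = theta p c"
  define n where "n = rr + 1"
  have tz: "t j = z (c * int j ^ 2)" for j unfolding t_def theta_def zz_def by simp
  have dist: "i = j" if "i < n" "j < n" "t i = t j" for i j
  proof -
    have cg: "[c * (int i)^2 = c * (int j)^2] (mod int p)" using that(3) unfolding tz z_eq_iff .
    have "int i = int j" by (rule sq_inj[OF cnd _ _ _ _ cg]) (use that n_def in auto)
    then show ?thesis by simp
  qed
  let ?Q = "\<Prod>a\<in>AA. [:- z a, 1:]"
  have PQ: "(\<Prod>j<n. [:- t j, 1:]) = [:-1, 1:] * ?Q"
  proof -
    have "{..<n} = insert 0 {1..rr}" unfolding n_def by auto
    then have "(\<Prod>j<n. [:- t j, 1:]) = [:- t 0, 1:] * (\<Prod>j\<in>{1..rr}. [:- t j, 1:])" by simp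
    moreover have "t 0 = 1" unfolding tz by simp
    moreover have "(\<Prod>j\<in>{1..rr}. [:- t j, 1:]) = ?Q"
    proof -
      have "(\<Prod>j\<in>{1..rr}. [:- t j, 1:]) = (\<Prod>x\<in>int ` {1..rr}. [:- z (c * x^2), 1:])"
        by (subst prod.reindex) (auto simp: tz)
      also have "int ` {1..rr} = {1..int rr}" by (simp add: image_int_atLeastAtMost)
      also have "(\<Prod>x\<in>{1..int rr}. [:- z (c * x^2), 1:]) = (\<Prod>x\<in>{1..int rr}. [:- z (c * x^2 mod int p), 1:])"
        by (simp add: z_mod)
      also have "\<dots> = ?Q"
      proof -
        have inj: "inj_on (\<lambda>x. c * x^2 mod int p) {1..int rr}"
        proof
          fix x y assume "x \<in> {1..int rr}" "y \<in> {1..int rr}" "c * x^2 mod int p = c * y^2 mod int p"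
          then show "x = y" using sq_inj[OF cnd, of x y] by (auto simp: cong_def)
        qed
        show ?thesis unfolding AA_def by (subst prod.reindex[OF inj]) (simp add: comp_def)
      qed
      finally show ?thesis .
    qed
    ultimately show ?thesis by simp
  qed
  have coefP: "coeff (\<Prod>j<n. [:- t j, 1:]) i \<in> quad_ring p" for i
  proof -
    have "[:-1, 1:] * ?Q = smult (-1) ?Q + pCons 0 ?Q" by (simp add: mult_pCons_left)
    then have "coeff (\<Prod>j<n. [:- t j, 1:]) i = - coeff ?Q i + (case i of 0 \<Rightarrow> 0 | Suc j \<Rightarrow> coeff ?Q j)"
      unfolding PQ by (simp add: coeff_pCons split: nat.split)
    moreover have "(case i of 0 \<Rightarrow> 0 | Suc j \<Rightarrow> coeff ?Q j) \<in> quad_ring p"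
      using qr_int[where a=0 and p=p] coeff_Q by (cases i) auto
    moreover have "- coeff ?Q i \<in> quad_ring p" by (rule qr_neg[OF coeff_Q])
    ultimately show ?thesis using qr_add by metis
  qed
  have V: "V_mat p c = mat n n (\<lambda>(j, k). t j ^ k)" unfolding V_mat_def t_def n_def ..
  have T: "T_mat p c = mat n n (\<lambda>(j, k). if j = k then t j else 0)" unfolding T_mat_def t_def n_def ..
  show ?thesis
  proof (intro allI impI)
    fix j k assume j: "j < (p - 1) div 2 + 1" and k: "k < (p - 1) div 2 + 1"
    have "(the (mat_inverse (V_mat p c)) * T_mat p c * V_mat p c) $$ (j, k) =
         (if k + 1 < n then (if j = k + 1 then 1 else 0) else - coeff (\<Prod>j<n. [:- t j, 1:]) j)"
      unfolding V T by (rule companion) (use dist j k n_def in auto)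
    moreover have "(1::complex) \<in> quad_ring p" "(0::complex) \<in> quad_ring p"
      using qr_int[where a=1 and p=p] qr_int[where a=0 and p=p] by auto
    ultimately show "(the (mat_inverse (V_mat p c)) * T_mat p c * V_mat p c) $$ (j, k) \<in> quad_ring p"
      using qr_neg[OF coefP] by auto
  qed
qed

end
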